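(* Let $T$ be a tree with at least two vertices. Then $$F(T)=\frac{1}{2}\sum_{v\in V(T)} F(T_v).$$
   Context: For a finite undirected graph $G=(V,E)$, a shelling of $G$ is a total ordering $\sigma(1),\ldots,\sigma(|E|)$ of $E$ such that for every $k$ the edges $\sigma(1),\ldots,\sigma(k)$ form a connected subgraph; $F(G)$ is the number of shellings of $G$. For a vertex $v$ of a tree $T$, $T_v$ denotes $T$ rooted at $v$, a shelling of $T_v$ is a shelling $\sigma$ of $T$ whose first edge $\sigma(1)$ is incident to $v$, and $F(T_v)$ is the number of shellings of $T_v$. *)

theory Defs
  imports Complex_Main
begin

definition simple_graph :: "'a set \<Rightarrow> 'a set set \<Rightarrow> bool" where
  "simple_graph V E \<longleftrightarrow> finite V \<and>
     (\<forall>e\<in>E. \<exists>u v. e = {u, v} \<and> u \<noteq> v \<and> u \<in> V \<and> v \<in> V)"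

definition adj :: "'a set set \<Rightarrow> 'a \<Rightarrow> 'a \<Rightarrow> bool" where
  "adj E u v \<longleftrightarrow> u \<noteq> v \<and> {u, v} \<in> E"

definition connected_graph :: "'a set \<Rightarrow> 'a set set \<Rightarrow> bool" where
  "connected_graph V E \<longleftrightarrow> V \<noteq> {} \<and> (\<forall>u\<in>V. \<forall>v\<in>V. (adj E)\<^sup>*\<^sup>* u v)"

definition is_cycle :: "'a set set \<Rightarrow> 'a list \<Rightarrow> bool" where
  "is_cycle E xs \<longleftrightarrow> length xs \<ge> 3 \<and> distinct xs \<and>
     (\<forall>i. Suc i < length xs \<longrightarrow> adj E (xs ! i) (xs ! Suc i)) \<and>
     adj E (last xs) (hd xs)"

definition is_tree :: "'a set \<Rightarrow> 'a set set \<Rightarrow> bool" where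
  "is_tree V E \<longleftrightarrow> simple_graph V E \<and> connected_graph V E \<and> (\<nexists>xs. is_cycle E xs)"

definition shelling :: "'a set set \<Rightarrow> 'a set list \<Rightarrow> bool" where
  "shelling E \<sigma> \<longleftrightarrow> distinct \<sigma> \<and> set \<sigma> = E \<and>
     (\<forall>k\<in>{1..length \<sigma>}. connected_graph (\<Union> (set (take k \<sigma>))) (set (take k \<sigma>)))"

definition num_shellings :: "'a set set \<Rightarrow> nat" where
  "num_shellings E = card {\<sigma>. shelling E \<sigma>}"

text \<open>Shellings of the rooted tree T_v: first edge incident to v.\<close>
definition num_rooted_shellings :: "'a set set \<Rightarrow> 'a \<Rightarrow> nat" where
  "num_rooted_shellings E v = card {\<sigma>. shelling E \<sigma> \<and> \<sigma> \<noteq> [] \<and> v \<in> hd \<sigma>}"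

end

theory Submission
  imports Defs
begin

theorem proposition3p6:
  fixes V :: "'a set" and E :: "'a set set"
  assumes "is_tree V E" and "card V \<ge> 2"
  shows "real (num_shellings E) = (1/2) * (\<Sum>v\<in>V. real (num_rooted_shellings E v))"
proof -
  have sg: "simple_graph V E" and cg: "connected_graph V E" using assms(1) by (simp_all add: is_tree_def)
  have fV: "finite V" using sg by (simp add: simple_graph_def)
  have EV: "E \<subseteq> Pow V"
  proof
    fix e assume "e \<in> E"
    then obtain u v where "e = {u,v}" "u \<in> V" "v \<in> V" using sg unfolding simple_graph_def by blast
    thus "e \<in> Pow V" by simp
  qed
  have fE: "finite E" using EV fV by (meson finite_Pow_iff finite_subset)
  have Ene: "E \<noteq> {}"
  proof
    assume "E = {}"
    have "\<not> card V \<le> Suc 0" using assms(2) by simp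
    then obtain u v where "u \<in> V" "v \<in> V" "u \<noteq> v"
      using card_le_Suc0_iff_eq[OF fV] by blast
    hence "(adj E)\<^sup>*\<^sup>* u v" using cg by (auto simp: connected_graph_def)
    hence "u = v" using \<open>E = {}\<close>
      by (induction rule: converse_rtranclp_induct) (auto simp: adj_def)
    thus False using \<open>u \<noteq> v\<close> by simp
  qed
  define S where "S = {\<sigma>. shelling E \<sigma>}"
  have fS: "finite S"
  proof (rule finite_subset)
    show "S \<subseteq> {xs. set xs \<subseteq> E \<and> length xs \<le> card E}"
      unfolding S_def shelling_def by (auto dest: distinct_card)
    show "finite {xs. set xs \<subseteq> E \<and> length xs \<le> card E}"
      using fE by (rule finite_lists_length_le)
  qed
  have ne1: "\<sigma> \<noteq> []" if "\<sigma> \<in> S" for \<sigma>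
    using that Ene unfolding S_def shelling_def by auto
  have ne2: "hd \<sigma> \<in> E" if "\<sigma> \<in> S" for \<sigma>
    using that ne1[OF that] hd_in_set[of \<sigma>] unfolding S_def shelling_def by blast

  have c2: "card {v\<in>V. v \<in> hd \<sigma>} = 2" if sS: "\<sigma> \<in> S" for \<sigma>
  proof -
    obtain u v where "hd \<sigma> = {u,v}" "u \<noteq> v" "u \<in> V" "v \<in> V"
      using ne2[OF sS] sg unfolding simple_graph_def by blast
    hence "{v\<in>V. v \<in> hd \<sigma>} = {u,v}" by auto
    thus ?thesis using \<open>u \<noteq> v\<close> by simp
  qed
  have r: "real (num_rooted_shellings E v) = (\<Sum>\<sigma>\<in>S. if v \<in> hd \<sigma> then 1 else 0)" for v
  proof -
    have "{\<sigma>. shelling E \<sigma> \<and> \<sigma> \<noteq> [] \<and> v \<in> hd \<sigma>} = {\<sigma>\<in>S. v \<in> hd \<sigma>}"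
      using ne1 ne2 unfolding S_def by auto
    thus ?thesis unfolding num_rooted_shellings_def
      using fS by (simp add: sum.If_cases Int_def)
  qed
  have "(\<Sum>v\<in>V. real (num_rooted_shellings E v))
      = (\<Sum>\<sigma>\<in>S. \<Sum>v\<in>V. if v \<in> hd \<sigma> then 1 else 0)"
    unfolding r by (rule sum.swap)
  also have "\<dots> = (\<Sum>\<sigma>\<in>S. 2)"
  proof (rule sum.cong[OF refl])
    fix \<sigma> assume "\<sigma> \<in> S"
    have "(\<Sum>v\<in>V. if v \<in> hd \<sigma> then 1 else (0::real)) = real (card {v\<in>V. v \<in> hd \<sigma>})"
      using fV by (simp add: sum.If_cases Int_def conj_commute)
    thus "(\<Sum>v\<in>V. if v \<in> hd \<sigma> then 1 else (0::real)) = 2" using c2[OF \<open>\<sigma> \<in> S\<close>] by simp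
  qed
  also have "\<dots> = 2 * real (num_shellings E)" unfolding num_shellings_def S_def by simp
  finally show ?thesis by simp
qed

end
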